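(* Let $X$ be a real Banach space such that $X^*$ has the Radon–Nikodym property (in the sense below), and let $C$ be a nonempty closed convex subset of $X^*$. Then $w^*\text{-}\mathrm{Exp}\,C$ is norm-dense in $\operatorname{int}\operatorname{dom}(\sigma_C|_X)$.
   Context: For a nonempty closed convex $C\subset X^*$, the support function on $X$ is $\sigma_C(u)=\sup_{c^*\in C}\langle c^*,u\rangle$ for $u\in X$, and $\operatorname{dom}(\sigma_C|_X)=\{u\in X:\sigma_C(u)<+\infty\}$, with interior taken in the norm topology of $X$. A point $u^*\in C$ is $w^*$-strongly exposed if there exists $u\in X$ such that for every sequence $(u_n^* )\subset C$, $\lim_n\langle u_n^*,u\rangle=\sigma_C(u)$ implies $\lim_n\|u_n^*-u^*\|=0$; such $u$ is called a $w^*$-strongly exposing functional for $u^*$. $w^*\text{-}\mathrm{exp}\,C$ denotes the set of $w^*$-strongly exposed points of $C$, and $w^*\text{-}\mathrm{Exp}\,C$ the set of all $u\in X$ that are $w^*$-strongly exposing functionals for some point of $C$. $X^*$ is said to have the Radon–Nikodym property if every nonempty weak$^*$-compact convex subset $K$ of $X^*$ satisfies $K=\overline{\mathrm{co}}^{w^*}(w^*\text{-}\mathrm{exp}\,K)$. *)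

theory Defs
  imports "HOL-Analysis.Analysis"
begin

text \<open>The dual space X* of a real Banach space X is modelled as the type of
bounded linear functionals  'a \<Rightarrow>L real ; the pairing is blinfun_apply.\<close>

text \<open>Weak-star topology on X*: the coarsest topology making all evaluation maps
continuous, i.e. the pullback of the product (pointwise) topology on 'a \<Rightarrow> real.\<close>
definition wstar_topology :: "('a::real_normed_vector \<Rightarrow>\<^sub>L real) topology" where
  "wstar_topology = pullback_topology UNIV blinfun_apply euclidean"

definition support_fun :: "('a::real_normed_vector \<Rightarrow>\<^sub>L real) set \<Rightarrow> 'a \<Rightarrow> ereal" where
  "support_fun C u = (SUP c\<in>C. ereal (blinfun_apply c u))"

definition support_dom :: "('a::real_normed_vector \<Rightarrow>\<^sub>L real) set \<Rightarrow> 'a set" where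
  "support_dom C = {u. support_fun C u < \<infinity>}"

definition wstar_strongly_exposes ::
  "('a::real_normed_vector \<Rightarrow>\<^sub>L real) set \<Rightarrow> 'a \<Rightarrow> ('a \<Rightarrow>\<^sub>L real) \<Rightarrow> bool" where
  "wstar_strongly_exposes C u p \<longleftrightarrow> p \<in> C \<and>
     (\<forall>s::nat \<Rightarrow> ('a \<Rightarrow>\<^sub>L real). (\<forall>n. s n \<in> C) \<longrightarrow>
        ((\<lambda>n. ereal (blinfun_apply (s n) u)) \<longlonglongrightarrow> support_fun C u) \<longrightarrow>
        ((\<lambda>n. norm (s n - p)) \<longlonglongrightarrow> 0))"

definition wstar_exp :: "('a::real_normed_vector \<Rightarrow>\<^sub>L real) set \<Rightarrow> ('a \<Rightarrow>\<^sub>L real) set" where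
  "wstar_exp C = {p. \<exists>u. wstar_strongly_exposes C u p}"

definition wstar_Exp :: "('a::real_normed_vector \<Rightarrow>\<^sub>L real) set \<Rightarrow> 'a set" where
  "wstar_Exp C = {u. \<exists>p. wstar_strongly_exposes C u p}"

definition dual_RNP :: "'a::real_normed_vector itself \<Rightarrow> bool" where
  "dual_RNP _ \<longleftrightarrow> (\<forall>K :: ('a \<Rightarrow>\<^sub>L real) set.
     K \<noteq> {} \<and> convex K \<and> compactin wstar_topology K \<longrightarrow>
     K = wstar_topology closure_of (convex hull (wstar_exp K)))"

end

theory Submission
  imports Defs
begin


lemma eval_cont: "continuous_map wstar_topology euclideanreal (\<lambda>c. blinfun_apply c x)"
proof -
  have "continuous_map (euclidean::('a::real_normed_vector \<Rightarrow> real) topology) euclideanreal (\<lambda>f. f x)"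
    using continuous_map_product_projection[of x UNIV "\<lambda>_. euclideanreal"]
    by (simp add: euclidean_product_topology)
  from continuous_map_pullback[OF this, of UNIV blinfun_apply]
  show ?thesis unfolding wstar_topology_def by (simp add: o_def)
qed

lemma topspace_wstar [simp]: "topspace wstar_topology = UNIV"
  unfolding wstar_topology_def topspace_pullback_topology by simp

lemma closedin_le: "closedin wstar_topology {c. \<forall>x. blinfun_apply c x \<le> g x}"
proof -
  have "closedin wstar_topology (\<Inter>x. {c. blinfun_apply c x \<le> g x})"
  proof (rule closedin_Inter)
    show "range (\<lambda>x. {c. blinfun_apply c x \<le> g x}) \<noteq> {}" by simp
    fix T assume "T \<in> range (\<lambda>x. {c. blinfun_apply c x \<le> g x})"
    then obtain x where T: "T = {c. blinfun_apply c x \<le> g x}" by auto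
    have "closedin wstar_topology {c \<in> topspace wstar_topology. blinfun_apply c x \<in> {..g x}}"
      by (rule closedin_continuous_map_preimage[OF eval_cont]) simp
    then show "closedin wstar_topology T" unfolding T by simp
  qed
  then show ?thesis by (simp add: set_eq_iff Inter_eq) 
qed



lemma alaoglu:
  fixes g :: "'a::real_normed_vector \<Rightarrow> real"
  assumes gR: "\<And>x. g x \<le> R * norm x"
  shows "compactin wstar_topology {c. \<forall>x. blinfun_apply c x \<le> g x}"
proof -
  define K where "K = {c::'a \<Rightarrow>\<^sub>L real. \<forall>x. blinfun_apply c x \<le> g x}"
  define L where "L = {f::'a\<Rightarrow>real. (\<forall>x y. f (x+y) = f x + f y) \<and> (\<forall>a x. f (a *\<^sub>R x) = a * f x) \<and> (\<forall>x. f x \<le> g x)}"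
  define P where "P = PiE UNIV (\<lambda>x::'a. {-R*norm x .. R*norm x})"
  have cP: "compact P"
    using compactin_PiE[of "\<lambda>_. euclideanreal" UNIV "\<lambda>x::'a. {-R*norm x .. R*norm x}"]
    by (simp add: P_def euclidean_product_topology)
  have LP: "L \<subseteq> P"
  proof
    fix f assume f: "f \<in> L"
    show "f \<in> P" unfolding P_def
    proof (simp add: PiE_def Pi_def extensional_def, intro allI conjI)
      fix x
      have fle: "\<And>x. f x \<le> g x" and fs: "\<And>a x. f (a *\<^sub>R x) = a * f x" using f by (auto simp: L_def)
      show "f x \<le> R * norm x" using fle[of x] gR[of x] by linarith
      have "f (-x) = - f x" using fs[of "-1" x] by simp
      moreover have "f (-x) \<le> R * norm x" using fle[of "-x"] gR[of "-x"] by simp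
      ultimately show "- (R * norm x) \<le> f x" by linarith
    qed
  qed
  have cL: "closed L"
  proof -
    have "L = (\<Inter>x. \<Inter>y. {f. f (x+y) = f x + f y}) \<inter> (\<Inter>a. \<Inter>x. {f. f (a *\<^sub>R x) = a * f x}) \<inter> (\<Inter>x. {f. f x \<le> g x})"
      by (auto simp: L_def)
    moreover have "closed \<dots>"
      by (intro closed_Int closed_INT ballI closed_Collect_eq closed_Collect_le continuous_intros continuous_on_product_coordinates)
    ultimately show ?thesis by simp
  qed
  have cptL: "compact L" using compact_Int_closed[OF cP cL] LP by (simp add: Int_absorb1)
  have LK: "L \<subseteq> blinfun_apply ` K"
  proof
    fix f assume f: "f \<in> L"
    then have lin: "linear f" by (auto simp: L_def linear_iff)
    have bnd: "norm (f x) \<le> norm x * R" for x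
    proof -
      have "f x \<in> {-R*norm x .. R*norm x}" using LP f unfolding P_def by (auto simp: PiE_def Pi_def)
      then show ?thesis by (auto simp: abs_le_iff mult.commute)
    qed
    have "bounded_linear f" using lin bnd by (auto simp: bounded_linear_def bounded_linear_axioms_def)
    then have "blinfun_apply (Blinfun f) = f" by (simp add: bounded_linear_Blinfun_apply)
    moreover have "Blinfun f \<in> K" using f \<open>bounded_linear f\<close> by (auto simp: K_def L_def bounded_linear_Blinfun_apply)
    ultimately show "f \<in> blinfun_apply ` K" by force
  qed
  have KL: "blinfun_apply ` K \<subseteq> L"
    by (auto simp: K_def L_def blinfun.add_right blinfun.scaleR_right)
  show ?thesis unfolding K_def[symmetric] compactin_def
  proof (intro conjI allI impI, simp)
    fix U assume U: "(\<forall>u\<in>U. openin wstar_topology u) \<and> K \<subseteq> \<Union>U"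
    have "\<forall>u\<in>U. \<exists>V. open V \<and> u = blinfun_apply -` V"
      using U unfolding wstar_topology_def openin_pullback_topology by auto
    then obtain V where V: "\<And>u. u \<in> U \<Longrightarrow> open (V u) \<and> u = blinfun_apply -` V u" by metis
    have "L \<subseteq> (\<Union>u\<in>U. V u)"
    proof
      fix f assume "f \<in> L"
      then obtain c where c: "c \<in> K" "f = blinfun_apply c" using LK by auto
      then obtain u where "u \<in> U" "c \<in> u" using U by auto
      then show "f \<in> (\<Union>u\<in>U. V u)" using V c by auto
    qed
    then obtain F where F: "F \<subseteq> U" "finite F" "L \<subseteq> (\<Union>u\<in>F. V u)"
      using compactE_image[OF cptL, of U V] V by metis
    have "K \<subseteq> \<Union>F"
    proof
      fix c assume "c \<in> K"
      then have "blinfun_apply c \<in> L" using KL by auto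
      then obtain u where "u \<in> F" "blinfun_apply c \<in> V u" using F by auto
      then show "c \<in> \<Union>F" using V F by auto
    qed
    then show "\<exists>F. finite F \<and> F \<subseteq> U \<and> K \<subseteq> \<Union>F" using F by auto
  qed
qed



abbreviation ev :: "('a::real_normed_vector \<Rightarrow>\<^sub>L real) \<Rightarrow> 'a \<Rightarrow> real" where
  "ev c x \<equiv> blinfun_apply c x"

context
  fixes C :: "('a::banach \<Rightarrow>\<^sub>L real) set"
  assumes Cne: "C \<noteq> {}"
begin

lemma sf_upper: "c \<in> C \<Longrightarrow> ereal (ev c x) \<le> support_fun C x"
  unfolding support_fun_def by (rule SUP_upper)

lemma sf_least: "(\<And>c. c \<in> C \<Longrightarrow> ev c x \<le> b) \<Longrightarrow> support_fun C x \<le> ereal b"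
  unfolding support_fun_def by (rule SUP_least) simp

lemma sf_le_iff: "support_fun C x \<le> ereal b \<longleftrightarrow> (\<forall>c\<in>C. ev c x \<le> b)"
  using sf_least sf_upper by (meson ereal_less_eq(3) order_trans)

lemma sf_ne_minf: "support_fun C x \<noteq> -\<infinity>"
proof -
  obtain c where "c \<in> C" using Cne by auto
  then show ?thesis using sf_upper[of c x] by auto
qed

lemma sf_approx:
  assumes "support_fun C x = ereal s" "e > 0"
  shows "\<exists>c\<in>C. ev c x > s - e"
proof (rule ccontr)
  assume "\<not> ?thesis"
  then have "support_fun C x \<le> ereal (s - e)" by (intro sf_least) (auto simp: not_less)
  then show False using assms by simp
qed

lemma sf_finite: "support_fun C x < \<infinity> \<Longrightarrow> \<exists>s. support_fun C x = ereal s"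
  using sf_ne_minf by (cases "support_fun C x") auto

lemma local_bound:
  assumes u0: "u0 \<in> interior (support_dom C)"
  shows "\<exists>\<rho>>0. \<exists>M. \<forall>v\<in>ball u0 \<rho>. support_fun C v \<le> ereal M"
proof -
  obtain r where r: "r > 0" "ball u0 r \<subseteq> support_dom C"
    using u0 by (meson mem_interior)
  define B where "B = cball u0 (r/2)"
  have Bdom: "B \<subseteq> support_dom C" using r unfolding B_def
    by (intro order_trans[OF _ r(2)]) (auto simp: subset_eq)
  define X where "X = subtopology euclidean B"
  have cmX: "completely_metrizable_space X"
    unfolding X_def by (intro completely_metrizable_space_closedin completely_metrizable_space_euclidean)
      (simp add: B_def)
  define F where "F = (\<lambda>k::nat. {v\<in>B. support_fun C v \<le> ereal (real k)})"
  have clF: "closedin X (F k)" for k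
  proof -
    have "F k = B \<inter> (\<Inter>c\<in>C. {v. ev c v \<le> real k})"
      unfolding F_def by (auto simp: sf_le_iff)
    moreover have "closed (\<Inter>c\<in>C. {v. ev c v \<le> real k})"
      by (intro closed_INT ballI closed_Collect_le continuous_intros)
    ultimately show ?thesis unfolding X_def
      by (simp add: closedin_closed_Int)
  qed
  have UF: "\<Union>(range F) = topspace X"
  proof
    show "\<Union>(range F) \<subseteq> topspace X" by (auto simp: F_def X_def)
    show "topspace X \<subseteq> \<Union>(range F)"
    proof
      fix v assume "v \<in> topspace X"
      then have vB: "v \<in> B" by (simp add: X_def)
      then have "support_fun C v < \<infinity>" using Bdom by (auto simp: support_dom_def)
      then obtain s where s: "support_fun C v = ereal s" using sf_finite by blast
      obtain k::nat where "s \<le> real k" using real_arch_simple by blast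
      then have "v \<in> F k" using vB s by (simp add: F_def)
      then show "v \<in> \<Union>(range F)" by auto
    qed
  qed
  have "X interior_of topspace X \<noteq> {}"
  proof -
    have "X interior_of topspace X = topspace X" by simp
    moreover have "u0 \<in> topspace X" using r by (simp add: X_def B_def)
    ultimately show ?thesis by blast
  qed
  then have "\<exists>T\<in>range F. \<not> (closedin X T \<and> X interior_of T = {})"
  proof -
    have "countable (range F)" by simp
    then show ?thesis using Baire_category_alt[of X "range F"] cmX UF \<open>X interior_of topspace X \<noteq> {}\<close> by metis
  qed
  then obtain k where "X interior_of F k \<noteq> {}" using clF by auto
  then obtain x U where xU: "openin X U" "x \<in> U" "U \<subseteq> F k"
    unfolding interior_of_def by auto
  then obtain V where V: "open V" "U = V \<inter> B" unfolding X_def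
    by (auto simp: openin_open)
  have "V \<inter> closure (ball u0 (r/2)) \<noteq> {}" using xU V r by (auto simp: B_def)
  then have "V \<inter> ball u0 (r/2) \<noteq> {}" using open_Int_closure_eq_empty[OF V(1)] by blast
  then obtain v1 where v1: "v1 \<in> V \<inter> ball u0 (r/2)" by blast
  have "open (V \<inter> ball u0 (r/2))" using V by auto
  then obtain r1 where r1: "r1 > 0" "ball v1 r1 \<subseteq> V \<inter> ball u0 (r/2)"
    using v1 open_contains_ball by blast
  have r1F: "ball v1 r1 \<subseteq> F k" using r1 xU V ball_subset_cball B_def by fastforce
  define v2 where "v2 = u0 + (u0 - v1)"
  have "dist u0 v2 = dist u0 v1" by (simp add: v2_def dist_norm norm_minus_commute)
  moreover have "dist u0 v1 < r/2" using v1 by simp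
  ultimately have "v2 \<in> ball u0 r" using r(1) by simp
  then have "support_fun C v2 < \<infinity>" using r by (auto simp: support_dom_def)
  then obtain s2 where s2: "support_fun C v2 = ereal s2" using sf_finite by blast
  show ?thesis
  proof (intro exI conjI ballI)
    show "r1/2 > 0" using r1 by simp
    fix v assume v: "v \<in> ball u0 (r1/2)"
    show "support_fun C v \<le> ereal ((real k + s2)/2)"
    proof (rule sf_least)
      fix c assume c: "c \<in> C"
      have "v1 + 2 *\<^sub>R (v - u0) \<in> ball v1 r1" using v by (auto simp: dist_norm norm_minus_commute)
      then have "support_fun C (v1 + 2 *\<^sub>R (v - u0)) \<le> ereal (real k)" using r1F by (auto simp: F_def)
      then have a: "ev c (v1 + 2 *\<^sub>R (v - u0)) \<le> real k" using c sf_le_iff by blast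
      have b: "ev c v2 \<le> s2" using sf_upper[OF c, of v2] s2 by simp
      have e: "(v1 + 2 *\<^sub>R (v - u0)) + v2 = 2 *\<^sub>R v"
        by (simp add: v2_def scaleR_right_diff_distrib scaleR_2)
      have "ev c ((v1 + 2 *\<^sub>R (v - u0)) + v2) = ev c (2 *\<^sub>R v)" by (simp only: e)
      then have "ev c (v1 + 2 *\<^sub>R (v - u0)) + ev c v2 = 2 * ev c v"
        by (simp only: blinfun.add_right blinfun.scaleR_right real_scaleR_def)
      moreover have "\<And>A B V::real. A + B = 2*V \<Longrightarrow> A \<le> real k \<Longrightarrow> B \<le> s2 \<Longrightarrow> V \<le> (real k + s2)/2"
        by (simp add: field_simps)
      ultimately show "ev c v \<le> (real k + s2)/2" using a b by blast
    qed
  qed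
qed

end


definition subd :: "('a::real_normed_vector \<Rightarrow>\<^sub>L real) set \<Rightarrow> 'a \<Rightarrow> ('a \<Rightarrow>\<^sub>L real) set" where
  "subd C z = {c. (\<forall>x. ereal (ev c x) \<le> support_fun C x) \<and> ereal (ev c z) = support_fun C z}"

lemma closedin_ereal_le: "closedin wstar_topology {c. \<forall>x. ereal (ev c x) \<le> G x}"
proof -
  have "closedin wstar_topology {c. ereal (ev c x) \<le> G x}" for x
  proof (cases "G x")
    case (real r)
    have "closedin wstar_topology {c \<in> topspace wstar_topology. ev c x \<in> {..r}}"
      by (rule closedin_continuous_map_preimage[OF eval_cont]) simp
    then show ?thesis using real by simp
  next
    case PInf
    then show ?thesis using closedin_topspace[of wstar_topology] by simp
  next
    case MInf
    then show ?thesis by simp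
  qed
  then have "closedin wstar_topology (\<Inter>x. {c. ereal (ev c x) \<le> G x})"
    by (intro closedin_Inter) auto
  then show ?thesis by (simp add: set_eq_iff Inter_eq)
qed

lemma closedin_ge: "closedin wstar_topology {c. a \<le> ev c z}"
proof -
  have "closedin wstar_topology {c \<in> topspace wstar_topology. ev c z \<in> {a..}}"
    by (rule closedin_continuous_map_preimage[OF eval_cont]) simp
  then show ?thesis by simp
qed

lemma norm_bound_ball:
  fixes c :: "'a::real_normed_vector \<Rightarrow>\<^sub>L real"
  assumes r: "r > 0" and h: "\<And>h. norm h < r \<Longrightarrow> ev c (z + h) \<le> M"
  shows "norm c \<le> 2 * (M - ev c z) / r"
proof (rule norm_blinfun_bound)
  have "ev c z \<le> M" using h[of 0] r by simp
  then show "0 \<le> 2 * (M - ev c z) / r" using r by simp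
  fix x
  show "norm (ev c x) \<le> 2 * (M - ev c z) / r * norm x"
  proof (cases "x = 0")
    case True then show ?thesis by simp
  next
    case False
    define t where "t = r / (2 * norm x)"
    have t: "t > 0" using r False by (simp add: t_def)
    have nh: "norm (t *\<^sub>R x) < r" "norm (- (t *\<^sub>R x)) < r"
      using r False by (simp_all add: t_def)
    have a: "ev c z + t * ev c x \<le> M" using h[OF nh(1)] by (simp add: blinfun.add_right blinfun.scaleR_right)
    have b: "ev c z - t * ev c x \<le> M" using h[OF nh(2)] by (simp add: blinfun.diff_right blinfun.scaleR_right)
    have "\<bar>ev c x\<bar> \<le> (M - ev c z) / t" using a b t by (simp add: field_simps abs_le_iff)
    also have "(M - ev c z) / t = 2 * (M - ev c z) / r * norm x" using r False by (simp add: t_def field_simps)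
    finally show ?thesis by simp
  qed
qed

context
  fixes C :: "('a::banach \<Rightarrow>\<^sub>L real) set"
  assumes Cne: "C \<noteq> {}"
begin

lemma C_sub_D: "c \<in> C \<Longrightarrow> \<forall>x. ereal (ev c x) \<le> support_fun C x"
  using sf_upper[OF Cne] by simp

lemma region:
  assumes u0: "u0 \<in> interior (support_dom C)"
  shows "\<exists>\<rho>>0. \<exists>R>0. \<forall>z\<in>ball u0 \<rho>. (\<exists>s. support_fun C z = ereal s) \<and> subd C z \<noteq> {} \<and> (\<forall>c\<in>subd C z. norm c \<le> R)"
proof -
  obtain \<rho>1 M where \<rho>1: "\<rho>1 > 0" and M: "\<And>v. v \<in> ball u0 \<rho>1 \<Longrightarrow> support_fun C v \<le> ereal M"
    using local_bound[OF Cne u0] by blast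
  define \<rho> where "\<rho> = \<rho>1 / 2"
  obtain c0 where c0: "c0 \<in> C" using Cne by auto
  define m where "m = norm c0 * (norm u0 + \<rho>) + 1"
  define R where "R = max 1 (2 * (M + m) / \<rho>)"
  have \<rho>: "\<rho> > 0" using \<rho>1 by (simp add: \<rho>_def)
  have fin: "\<exists>s. support_fun C z = ereal s" if z: "z \<in> ball u0 \<rho>" for z
  proof -
    have "z \<in> ball u0 \<rho>1" using z \<rho>1 by (simp add: \<rho>_def)
    then have "support_fun C z \<le> ereal M" using M by blast
    then have "support_fun C z < \<infinity>" using order_le_less_trans by fastforce
    then show ?thesis using sf_finite[OF Cne] by blast
  qed
  have bnd: "norm c \<le> R" if z: "z \<in> ball u0 \<rho>" and D: "\<forall>x. ereal (ev c x) \<le> support_fun C x"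
    and s: "support_fun C z = ereal s" and cz: "s - 1 \<le> ev c z" for z c s
  proof -
    have h: "ev c (z + h) \<le> M" if "norm h < \<rho>" for h
    proof -
      have "dist u0 (z + h) \<le> dist u0 z + norm h"
        using dist_triangle[of u0 "z+h" z] by (simp add: dist_norm)
      then have "z + h \<in> ball u0 \<rho>1" using z that by (simp add: \<rho>_def)
      then have "ereal (ev c (z+h)) \<le> ereal M" using D M order_trans by blast
      then show ?thesis by simp
    qed
    have nz: "norm z \<le> norm u0 + \<rho>"
      using z norm_triangle_ineq2[of z u0] by (simp add: dist_norm norm_minus_commute)
    have "ereal (ev c0 z) \<le> ereal s" using sf_upper[OF Cne c0, of z] s by simp
    then have "ev c0 z \<le> s" by simp
    moreover have "- (norm c0 * norm z) \<le> ev c0 z"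
      using norm_blinfun[of c0 z] by (simp add: abs_le_iff)
    moreover have "norm c0 * norm z \<le> norm c0 * (norm u0 + \<rho>)"
      using nz by (simp add: mult_left_mono)
    ultimately have "- m \<le> ev c z" using cz by (simp add: m_def)
    have "norm c \<le> 2 * (M - ev c z) / \<rho>" by (rule norm_bound_ball[OF \<rho> h])
    also have "\<dots> \<le> 2 * (M + m) / \<rho>" using \<open>- m \<le> ev c z\<close> \<rho> by (simp add: divide_right_mono)
    also have "\<dots> \<le> R" by (simp add: R_def)
    finally show ?thesis .
  qed
  have "\<forall>z\<in>ball u0 \<rho>. (\<exists>s. support_fun C z = ereal s) \<and> subd C z \<noteq> {} \<and> (\<forall>c\<in>subd C z. norm c \<le> R)"
  proof (rule ballI)
    fix z assume z: "z \<in> ball u0 \<rho>"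
    obtain s where s: "support_fun C z = ereal s" using fin[OF z] by blast
    have A: "\<exists>s. support_fun C z = ereal s" using s by blast
    have B: "\<forall>c\<in>subd C z. norm c \<le> R"
      using bnd[OF z _ s] s by (auto simp: subd_def)
    define E where "E = {c. \<forall>x. ereal (ev c x) \<le> support_fun C x} \<inter> {c. s - 1 \<le> ev c z} \<inter> {c. \<forall>x. ev c x \<le> R * norm x}"
    have cE: "compactin wstar_topology E"
      unfolding E_def
      by (rule closed_compactin[OF alaoglu[of "\<lambda>x. R * norm x" R]])
         (auto intro!: closedin_Int closedin_ereal_le closedin_ge closedin_le)
    have inE: "c \<in> E" if "c \<in> C" "s - 1 < ev c z" for c
    proof -
      have D: "\<forall>x. ereal (ev c x) \<le> support_fun C x" using that C_sub_D by blast
      have "norm c \<le> R" using bnd[OF z D s] that by simp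
      then have "ev c x \<le> R * norm x" for x
      proof -
        have "ev c x \<le> norm c * norm x" using norm_blinfun[of c x] by simp
        also have "\<dots> \<le> R * norm x" using \<open>norm c \<le> R\<close> by (simp add: mult_right_mono)
        finally show ?thesis .
      qed
      then show ?thesis using D that by (auto simp: E_def)
    qed
    obtain c1 where c1: "c1 \<in> C" "ev c1 z > s - 1" using sf_approx[OF Cne s, of 1] by auto
    have Ene: "(\<lambda>c. ev c z) ` E \<noteq> {}" using inE[OF c1] by auto
    have "compact ((\<lambda>c. ev c z) ` E)"
      using image_compactin[OF cE eval_cont] by simp
    then obtain cm where cm: "cm \<in> E" "\<And>c. c \<in> E \<Longrightarrow> ev c z \<le> ev cm z"
      using compact_attains_sup[OF _ Ene] by auto
    have "ereal (ev cm z) \<le> support_fun C z" using cm(1) by (simp add: E_def)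
    then have le: "ev cm z \<le> s" using s by simp
    have "ev cm z \<ge> s"
    proof (rule ccontr)
      assume "\<not> ev cm z \<ge> s"
      then have e: "min 1 (s - ev cm z) > 0" by simp
      obtain c where c: "c \<in> C" "ev c z > s - min 1 (s - ev cm z)" using sf_approx[OF Cne s e] by auto
      have "s - 1 < ev c z" using c(2) by linarith
      then have "c \<in> E" using inE c(1) by blast
      then have "ev c z \<le> ev cm z" using cm(2) by blast
      then show False using c(2) by linarith
    qed
    then have "cm \<in> subd C z" using le cm(1) s by (auto simp: subd_def E_def)
    then have "subd C z \<noteq> {}" by auto
    then show "(\<exists>s. support_fun C z = ereal s) \<and> subd C z \<noteq> {} \<and> (\<forall>c\<in>subd C z. norm c \<le> R)"
      using A B by blast
  qed
  moreover have "R > 0" by (simp add: R_def)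
  ultimately show ?thesis using \<rho> by blast
qed

end


lemma ev_abs_le: "norm c \<le> R \<Longrightarrow> norm h \<le> d \<Longrightarrow> \<bar>ev c h\<bar> \<le> R * d"
proof -
  assume a: "norm c \<le> R" "norm h \<le> d"
  have "\<bar>ev c h\<bar> \<le> norm c * norm h" using norm_blinfun[of c h] by simp
  also have "\<dots> \<le> R * d" using a by (intro mult_mono) (auto intro: order_trans[OF norm_ge_zero])
  finally show ?thesis .
qed

context
  fixes C :: "('a::banach \<Rightarrow>\<^sub>L real) set"
  assumes Cne: "C \<noteq> {}" and RNP: "dual_RNP TYPE('a)"
begin

lemma dense_step:
  assumes reg: "\<forall>z\<in>W. (\<exists>s. support_fun C z = ereal s) \<and> subd C z \<noteq> {} \<and> (\<forall>c\<in>subd C z. norm c \<le> R)"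
    and R: "R > 0" and r: "r > 0" and wr: "ball w r \<subseteq> W" and e: "\<epsilon> > 0"
  shows "\<exists>w' \<delta> q. \<delta> > 0 \<and> \<delta> \<le> r/2 \<and> cball w' \<delta> \<subseteq> ball w r \<and> (\<forall>v\<in>cball w' \<delta>. \<forall>c\<in>subd C v. norm (c - q) \<le> \<epsilon>)"
proof -
  define U where "U = (\<Union>z\<in>ball w r. subd C z)"
  have wW: "w \<in> W" using wr r by auto
  have Une: "U \<noteq> {}" using reg wW r unfolding U_def by (metis UN_I centre_in_ball ex_in_conv)
  have Ub: "norm c \<le> R" if "c \<in> U" for c using that reg wr unfolding U_def by blast
  have evb: "ev c x \<le> R * norm x" if "c \<in> U" for c x
    using ev_abs_le[OF Ub[OF that], of x "norm x"] by simp
  have bdd: "bdd_above ((\<lambda>c. ev c x) ` U)" for x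
    using evb by (intro bdd_aboveI2) blast
  define g where "g x = (SUP c\<in>U. ev c x)" for x
  have gup: "ev c x \<le> g x" if "c \<in> U" for c x
    unfolding g_def using that bdd by (rule cSUP_upper)
  have gR: "g x \<le> R * norm x" for x
    unfolding g_def using Une evb by (intro cSUP_least) auto
  define K where "K = {c. \<forall>x. ev c x \<le> g x}"
  have UK: "U \<subseteq> K" using gup by (auto simp: K_def)
  have Kne: "K \<noteq> {}" using UK Une by auto
  have cvK: "convex K"
    unfolding convex_def
  proof (intro allI impI ballI)
    fix a b :: "'a \<Rightarrow>\<^sub>L real" and u v :: real
    assume a: "a \<in> K" and b: "b \<in> K" and u: "0 \<le> u" "0 \<le> v" "u + v = 1"
    have "ev (u *\<^sub>R a + v *\<^sub>R b) x \<le> g x" for x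
    proof -
      have "ev (u *\<^sub>R a + v *\<^sub>R b) x = u * ev a x + v * ev b x"
        by (simp add: blinfun.add_left blinfun.scaleR_left)
      also have "\<dots> \<le> u * g x + v * g x"
        using a b u by (intro add_mono mult_left_mono) (auto simp: K_def)
      also have "\<dots> = (u + v) * g x" by (simp add: distrib_right)
      also have "\<dots> = g x" using u by simp
      finally show ?thesis .
    qed
    then show "u *\<^sub>R a + v *\<^sub>R b \<in> K" by (simp add: K_def)
  qed
  have cpK: "compactin wstar_topology K" unfolding K_def by (rule alaoglu[OF gR])
  have "K = wstar_topology closure_of (convex hull (wstar_exp K))"
    using RNP Kne cvK cpK unfolding dual_RNP_def by blast
  then have "wstar_exp K \<noteq> {}" using Kne by auto
  then obtain p y where py: "wstar_strongly_exposes K y p" unfolding wstar_exp_def by auto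
  have pK: "p \<in> K" using py by (simp add: wstar_strongly_exposes_def)
  have sKu: "support_fun K y \<le> ereal (g y)"
    unfolding support_fun_def by (rule SUP_least) (simp add: K_def)
  have sKl: "ereal (ev p y) \<le> support_fun K y"
    unfolding support_fun_def using pK by (rule SUP_upper)
  obtain sk where sk: "support_fun K y = ereal sk" using sKu sKl
    by (cases "support_fun K y") auto
  have skg: "sk \<le> g y" using sKu sk by simp
  have cK_le: "ev c y \<le> sk" if "c \<in> K" for c
  proof -
    have "ereal (ev c y) \<le> support_fun K y" unfolding support_fun_def using that by (rule SUP_upper)
    then show ?thesis using sk by simp
  qed
  have "\<exists>\<alpha>>0. \<forall>c\<in>K. ev c y > sk - \<alpha> \<longrightarrow> norm (c - p) < \<epsilon>"
  proof (rule ccontr)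
    assume na: "\<not> ?thesis"
    have "\<forall>n::nat. \<exists>c. c \<in> K \<and> ev c y > sk - 1 / (real n + 1) \<and> norm (c - p) \<ge> \<epsilon>"
    proof
      fix n :: nat
      have "1 / (real n + 1) > 0" by simp
      then show "\<exists>c. c \<in> K \<and> ev c y > sk - 1 / (real n + 1) \<and> norm (c - p) \<ge> \<epsilon>"
        using na by (meson not_less)
    qed
    then obtain s where s: "\<And>n. s n \<in> K" "\<And>n. ev (s n) y > sk - 1 / (real n + 1)" "\<And>n. norm (s n - p) \<ge> \<epsilon>"
      by metis
    have "(\<lambda>n. ev (s n) y) \<longlonglongrightarrow> sk"
    proof (rule metric_LIMSEQ_I)
      fix r :: real assume r: "r > 0"
      obtain N :: nat where N: "1 / (real N + 1) < r"
      proof -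
        obtain n where "inverse (of_nat (Suc n)) < r" using reals_Archimedean[OF r] by blast
        then show ?thesis using that[of n] by (simp add: inverse_eq_divide add.commute)
      qed
      show "\<exists>no. \<forall>n\<ge>no. dist (ev (s n) y) sk < r"
      proof (intro exI allI impI)
        fix n assume "N \<le> n"
        then have "1 / (real n + 1) \<le> 1 / (real N + 1)" by (simp add: frac_le)
        then show "dist (ev (s n) y) sk < r"
          using s(2)[of n] cK_le[OF s(1)[of n]] N by (simp add: dist_real_def)
      qed
    qed
    then have "(\<lambda>n. ereal (ev (s n) y)) \<longlonglongrightarrow> support_fun K y"
      using sk by (simp add: tendsto_ereal)
    then have "(\<lambda>n. norm (s n - p)) \<longlonglongrightarrow> 0"
      using py s(1) by (simp add: wstar_strongly_exposes_def)
    moreover have "\<exists>N. \<forall>n\<ge>N. \<epsilon> \<le> norm (s n - p)" using s(3) by blast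
    ultimately have "\<epsilon> \<le> 0" by (rule LIMSEQ_le_const)
    then show False using e by simp
  qed
  then obtain \<alpha> where \<alpha>: "\<alpha> > 0" "\<And>c. c \<in> K \<Longrightarrow> ev c y > sk - \<alpha> \<Longrightarrow> norm (c - p) < \<epsilon>"
    by blast
  have "g y - \<alpha>/2 < g y" using \<alpha> by simp
  then obtain zs where zsU: "zs \<in> U" and zsy: "ev zs y > g y - \<alpha>/2"
    unfolding g_def using less_cSUP_iff[OF Une bdd] by blast
  then obtain z where z: "z \<in> ball w r" "zs \<in> subd C z" unfolding U_def by blast
  have zW: "z \<in> W" using z wr by auto
  have zsD: "\<forall>x. ereal (ev zs x) \<le> support_fun C x" and zsz: "ereal (ev zs z) = support_fun C z"
    using z(2) by (auto simp: subd_def)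
  have zsR: "norm zs \<le> R" using reg zW z(2) by blast
  define dz where "dz = r - dist w z"
  have dz: "dz > 0" "dz \<le> r" using z(1) by (auto simp: dz_def)
  define t where "t = dz / (2 * (norm y + 1))"
  have "2 * (norm y + 1) > 0" using norm_ge_zero[of y] by smt
  then have t: "t > 0" using dz unfolding t_def by (intro divide_pos_pos)
  have tny: "t * norm y < dz / 2"
  proof -
    have "t * norm y < t * (norm y + 1)" using t by simp
    also have "\<dots> = dz / 2"
    proof -
      have ny: "norm y + 1 \<noteq> 0" using norm_ge_zero[of y] by smt
      show ?thesis unfolding t_def using ny by (simp add: field_simps)
    qed
    finally show ?thesis .
  qed
  define \<delta> where "\<delta> = min (t * \<alpha> / (4 * R)) (dz / 4)"
  have \<delta>: "\<delta> > 0" "\<delta> \<le> r/2" "\<delta> \<le> dz/4" "2 * R * \<delta> \<le> t * \<alpha> / 2"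
  proof -
    show "\<delta> > 0" using t \<alpha> R dz by (simp add: \<delta>_def)
    show "\<delta> \<le> r/2" using dz by (simp add: \<delta>_def)
    show "\<delta> \<le> dz/4" by (simp add: \<delta>_def)
    have "\<delta> \<le> t * \<alpha> / (4 * R)" by (simp add: \<delta>_def)
    then have "2 * R * \<delta> \<le> 2 * R * (t * \<alpha> / (4 * R))" using R by (intro mult_left_mono) auto
    also have "\<dots> = t * \<alpha> / 2" using R by (simp add: field_simps)
    finally show "2 * R * \<delta> \<le> t * \<alpha> / 2" .
  qed
  define w' where "w' = z + t *\<^sub>R y"
  have sub: "cball w' \<delta> \<subseteq> ball w r"
  proof
    fix v assume v: "v \<in> cball w' \<delta>"
    have "dist w v \<le> dist w z + dist z w' + dist w' v"
      by (metis dist_triangle add_right_mono order_trans)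
    moreover have "dist z w' = t * norm y" using t by (simp add: w'_def dist_norm)
    moreover have "dist w' v \<le> \<delta>" using v by simp
    ultimately have "dist w v < dist w z + dz" using tny \<delta>(3) dz by linarith
    then show "v \<in> ball w r" by (simp add: dz_def)
  qed
  have main: "norm (c - p) \<le> \<epsilon>" if v: "v \<in> cball w' \<delta>" and c: "c \<in> subd C v" for v c
  proof -
    have vU: "v \<in> ball w r" using sub v by blast
    then have cU: "c \<in> U" using c unfolding U_def by blast
    then have cK: "c \<in> K" using UK by blast
    have cR: "norm c \<le> R" using Ub[OF cU] .
    have cD: "\<forall>x. ereal (ev c x) \<le> support_fun C x" and cv: "ereal (ev c v) = support_fun C v"
      using c by (auto simp: subd_def)
    have i1: "ev zs v \<le> ev c v" using zsD cv by (metis ereal_less_eq(3))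
    have i2: "ev c z \<le> ev zs z" using cD zsz by (metis ereal_less_eq(3))
    define h where "h = v - w'"
    have nh: "norm h \<le> \<delta>" using v by (simp add: h_def dist_norm norm_minus_commute)
    have vz: "v = z + (t *\<^sub>R y + h)" by (simp add: h_def w'_def)
    have ec: "ev c v = ev c z + t * ev c y + ev c h"
      by (simp add: vz blinfun.add_right blinfun.scaleR_right)
    have ez: "ev zs v = ev zs z + t * ev zs y + ev zs h"
      by (simp add: vz blinfun.add_right blinfun.scaleR_right)
    have hc: "\<bar>ev c h\<bar> \<le> R * \<delta>" by (rule ev_abs_le[OF cR nh])
    have hz: "\<bar>ev zs h\<bar> \<le> R * \<delta>" by (rule ev_abs_le[OF zsR nh])
    have "t * ev c y \<ge> t * ev zs y - 2 * R * \<delta>"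
      using i1 i2 ec ez hc hz by (simp add: abs_le_iff)
    then have "t * ev c y \<ge> t * ev zs y - t * \<alpha> / 2" using \<delta>(4) by linarith
    then have "t * ev c y \<ge> t * (ev zs y - \<alpha> / 2)" by (simp add: algebra_simps)
    then have "ev c y \<ge> ev zs y - \<alpha> / 2" using t by simp
    then have "ev c y > sk - \<alpha>" using zsy skg by linarith
    then show ?thesis using \<alpha>(2)[OF cK] by simp
  qed
  show ?thesis
    using \<delta>(1,2) sub main by blast
qed

end


lemma norm_bound_local:
  fixes f :: "'a::real_normed_vector \<Rightarrow>\<^sub>L real"
  assumes d: "d > 0" and a: "a \<ge> 0" and eta: "\<eta> \<ge> 0"
    and h: "\<And>h. norm h < d \<Longrightarrow> ev f h \<le> a * norm h + \<eta>"
  shows "norm f \<le> a + 2 * \<eta> / d"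
proof (rule norm_blinfun_bound)
  show "0 \<le> a + 2 * \<eta> / d" using a eta d by simp
  fix x
  show "norm (ev f x) \<le> (a + 2 * \<eta> / d) * norm x"
  proof (cases "x = 0")
    case True then show ?thesis by simp
  next
    case False
    define t where "t = d / (2 * norm x)"
    have t: "t > 0" using d False by (simp add: t_def)
    have nt: "norm (t *\<^sub>R x) = d / 2" "norm (- (t *\<^sub>R x)) = d / 2"
      using False t d by (simp_all add: t_def)
    have l1: "norm (t *\<^sub>R x) < d" and l2: "norm (- (t *\<^sub>R x)) < d" using nt d by simp_all
    have c1: "ev f (t *\<^sub>R x) \<le> a * (d/2) + \<eta>" using h[OF l1] unfolding nt(1) .
    have c2: "ev f (- (t *\<^sub>R x)) \<le> a * (d/2) + \<eta>" using h[OF l2] unfolding nt(2) .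
    have b1: "t * ev f x \<le> a * (d/2) + \<eta>" using c1 by (simp add: blinfun.scaleR_right)
    have b2: "- (t * ev f x) \<le> a * (d/2) + \<eta>" using c2 by (simp add: blinfun.scaleR_right blinfun.minus_right)
    have "\<bar>t * ev f x\<bar> \<le> a * (d/2) + \<eta>" using b1 b2 by (simp add: abs_le_iff)
    then have "t * \<bar>ev f x\<bar> \<le> a * (d/2) + \<eta>" using t by (simp add: abs_mult)
    then have "\<bar>ev f x\<bar> \<le> (a * (d/2) + \<eta>) / t" using t by (simp add: field_simps)
    also have "(a * (d/2) + \<eta>) / t = (a + 2 * \<eta> / d) * norm x"
      using d False by (simp add: t_def field_simps)
    finally show ?thesis by simp
  qed
qed

context
  fixes C :: "('a::banach \<Rightarrow>\<^sub>L real) set"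
  assumes Cne: "C \<noteq> {}" and Ccl: "closed C"
begin

lemma smul_bound:
  assumes reg: "\<forall>z\<in>W. (\<exists>s. support_fun C z = ereal s) \<and> subd C z \<noteq> {} \<and> (\<forall>c\<in>subd C z. norm c \<le> R)"
    and d: "\<delta> > 0" and bW: "ball u \<delta> \<subseteq> W" and e: "\<epsilon> \<ge> 0"
    and q: "\<forall>v\<in>ball u \<delta>. \<forall>c\<in>subd C v. norm (c - q) \<le> \<epsilon>"
    and su: "support_fun C u = ereal su"
    and s: "s \<in> C" and eta: "\<eta> > 0" and sl: "ev s u > su - \<eta>"
  shows "norm (s - q) \<le> \<epsilon> + 2 * \<eta> / \<delta>"
proof (rule norm_bound_local[OF d e])
  show "0 \<le> \<eta>" using eta by simp
  fix h :: 'a assume nh: "norm h < \<delta>"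
  have vb: "u + h \<in> ball u \<delta>" using nh by (simp add: dist_norm)
  then have "u + h \<in> W" using bW by blast
  then obtain w where w: "w \<in> subd C (u + h)" using reg by blast
  have wD: "\<forall>x. ereal (ev w x) \<le> support_fun C x" and wv: "ereal (ev w (u+h)) = support_fun C (u+h)"
    using w by (auto simp: subd_def)
  have i1: "ev s (u+h) \<le> ev w (u+h)" using sf_upper[OF Cne s, of "u+h"] wv by (metis ereal_less_eq(3))
  have i2: "ev w u \<le> su" using wD su by (metis ereal_less_eq(3))
  have wq: "norm (w - q) \<le> \<epsilon>" using q vb w by blast
  have i3: "ev (w - q) h \<le> \<epsilon> * norm h"
  proof -
    have "ev (w - q) h \<le> norm (w - q) * norm h" using norm_blinfun[of "w - q" h] by simp
    also have "\<dots> \<le> \<epsilon> * norm h" using wq by (simp add: mult_right_mono)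
    finally show ?thesis .
  qed
  have "ev (s - q) h = ev s (u+h) - ev s u - ev q h"
    by (simp add: blinfun.add_right blinfun.diff_left)
  also have "\<dots> \<le> ev w (u+h) - ev w u + \<eta> - ev q h" using i1 i2 sl by smt
  also have "\<dots> = ev (w - q) h + \<eta>" by (simp add: blinfun.add_right blinfun.diff_left)
  also have "\<dots> \<le> \<epsilon> * norm h + \<eta>" using i3 by simp
  finally show "ev (s - q) h \<le> \<epsilon> * norm h + \<eta>" .
qed


lemma exposes:
  assumes reg: "\<forall>z\<in>W. (\<exists>s. support_fun C z = ereal s) \<and> subd C z \<noteq> {} \<and> (\<forall>c\<in>subd C z. norm c \<le> R)"
    and uW: "u \<in> W"
    and P: "\<forall>\<epsilon>>0. \<exists>\<delta>>0. \<exists>q. ball u \<delta> \<subseteq> W \<and> (\<forall>v\<in>ball u \<delta>. \<forall>c\<in>subd C v. norm (c - q) \<le> \<epsilon>)"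
  shows "u \<in> wstar_Exp C"
proof -
  obtain su where su: "support_fun C u = ereal su" using reg uW by blast
  obtain p where p: "p \<in> subd C u" using reg uW by blast
  have key: "\<exists>\<delta>>0. \<forall>s\<in>C. \<forall>\<eta>>0. ev s u > su - \<eta> \<longrightarrow> norm (s - p) \<le> 2 * \<epsilon> + 2 * \<eta> / \<delta>"
    if e: "\<epsilon> > 0" for \<epsilon>
  proof -
    obtain \<delta> q where d: "\<delta> > 0" "ball u \<delta> \<subseteq> W" "\<forall>v\<in>ball u \<delta>. \<forall>c\<in>subd C v. norm (c - q) \<le> \<epsilon>"
      using P e by blast
    have pq: "norm (p - q) \<le> \<epsilon>" using d(1,3) p centre_in_ball by blast
    show ?thesis
    proof (intro exI conjI ballI allI impI)
      show "\<delta> > 0" by fact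
      fix s \<eta> assume s: "s \<in> C" and eta: "\<eta> > 0" and sl: "ev s u > su - \<eta>"
      have "norm (s - q) \<le> \<epsilon> + 2 * \<eta> / \<delta>"
        using smul_bound[OF reg d(1,2) _ d(3) su s eta sl] e by simp
      moreover have "norm (s - p) \<le> norm (s - q) + norm (p - q)"
        by (metis norm_triangle_ineq4 diff_diff_eq2 add.commute diff_add_cancel norm_minus_commute
            norm_diff_triangle_ineq order_refl)
      ultimately show "norm (s - p) \<le> 2 * \<epsilon> + 2 * \<eta> / \<delta>" using pq by smt
    qed
  qed
  have conv: "(\<lambda>n. norm (t n - p)) \<longlonglongrightarrow> 0"
    if t: "\<And>n. t n \<in> C" and tl: "(\<lambda>n. ev (t n) u) \<longlonglongrightarrow> su" for t
  proof (rule metric_LIMSEQ_I)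
    fix r :: real assume r: "r > 0"
    obtain \<delta> where d: "\<delta> > 0" "\<And>s \<eta>. s \<in> C \<Longrightarrow> \<eta> > 0 \<Longrightarrow> ev s u > su - \<eta> \<Longrightarrow> norm (s - p) \<le> 2 * (r/4) + 2 * \<eta> / \<delta>"
      using key[of "r/4"] r by auto
    define \<eta> where "\<eta> = r * \<delta> / 8"
    have eta: "\<eta> > 0" using r d by (simp add: \<eta>_def)
    obtain N where N: "\<And>n. n \<ge> N \<Longrightarrow> dist (ev (t n) u) su < \<eta>"
      using metric_LIMSEQ_D[OF tl eta] by blast
    have "2 * \<eta> / \<delta> = r / 4" using d by (simp add: \<eta>_def)
    show "\<exists>no. \<forall>n\<ge>no. dist (norm (t n - p)) 0 < r"
    proof (intro exI allI impI)
      fix n assume "N \<le> n"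
      then have "ev (t n) u > su - \<eta>" using N[of n] by (simp add: dist_real_def abs_less_iff)
      then have "norm (t n - p) \<le> 2 * (r/4) + 2 * \<eta> / \<delta>" using d(2) t eta by blast
      then show "dist (norm (t n - p)) 0 < r" using \<open>2 * \<eta> / \<delta> = r / 4\<close> r by simp
    qed
  qed
  have pC: "p \<in> C"
  proof -
    have "\<forall>n::nat. \<exists>s. s \<in> C \<and> ev s u > su - 1 / (real n + 1)"
    proof
      fix n :: nat
      have "1 / (real n + 1) > 0" by simp
      then show "\<exists>s. s \<in> C \<and> ev s u > su - 1 / (real n + 1)" using sf_approx[OF Cne su] by blast
    qed
    then obtain s where s: "\<And>n. s n \<in> C" "\<And>n. ev (s n) u > su - 1 / (real n + 1)" by metis
    have sl: "(\<lambda>n. ev (s n) u) \<longlonglongrightarrow> su"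
    proof (rule metric_LIMSEQ_I)
      fix r :: real assume r: "r > 0"
      obtain N where N: "inverse (of_nat (Suc N)) < r" using reals_Archimedean[OF r] by blast
      show "\<exists>no. \<forall>n\<ge>no. dist (ev (s n) u) su < r"
      proof (intro exI allI impI)
        fix n assume "N \<le> n"
        then have "1 / (real n + 1) \<le> 1 / (real N + 1)" by (simp add: frac_le)
        moreover have "ev (s n) u \<le> su" using sf_upper[OF Cne s(1)[of n], of u] su by simp
        ultimately show "dist (ev (s n) u) su < r"
          using s(2)[of n] N by (simp add: dist_real_def inverse_eq_divide add.commute)
      qed
    qed
    have "(\<lambda>n. norm (s n - p)) \<longlonglongrightarrow> 0" by (rule conv[OF s(1) sl])
    then have "s \<longlonglongrightarrow> p" by (simp add: tendsto_norm_zero_iff LIM_zero_cancel)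
    then show ?thesis using Ccl s(1) closed_sequentially by blast
  qed
  have "wstar_strongly_exposes C u p"
    unfolding wstar_strongly_exposes_def
  proof (intro conjI allI impI)
    show "p \<in> C" by fact
    fix t assume t: "\<forall>n. t n \<in> C" and tl: "(\<lambda>n. ereal (ev (t n) u)) \<longlonglongrightarrow> support_fun C u"
    have "(\<lambda>n. ev (t n) u) \<longlonglongrightarrow> su" using tl su by (simp add: lim_ereal)
    then show "(\<lambda>n. norm (t n - p)) \<longlonglongrightarrow> 0" using conv t by blast
  qed
  then show ?thesis unfolding wstar_Exp_def by blast
qed

end


lemma arith1: "(a::real) \<le> b + c \<Longrightarrow> b \<le> K \<Longrightarrow> c \<le> K \<Longrightarrow> K < e/2 \<Longrightarrow> a < e" by linarith

context
  fixes C :: "('a::banach \<Rightarrow>\<^sub>L real) set"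
  assumes Cne: "C \<noteq> {}" and RNP: "dual_RNP TYPE('a)"
begin

lemma nested:
  assumes reg: "\<forall>z\<in>W. (\<exists>s. support_fun C z = ereal s) \<and> subd C z \<noteq> {} \<and> (\<forall>c\<in>subd C z. norm c \<le> R)"
    and R: "R > 0" and r0: "r0 > 0" and bW: "ball u0 r0 \<subseteq> W"
  shows "\<exists>u\<in>ball u0 r0. \<forall>\<epsilon>>0. \<exists>\<delta>>0. \<exists>q. ball u \<delta> \<subseteq> W \<and> (\<forall>v\<in>ball u \<delta>. \<forall>c\<in>subd C v. norm (c - q) \<le> \<epsilon>)"
proof -
  have "\<forall>n w r. \<exists>x. (r > 0 \<and> ball w r \<subseteq> W) \<longrightarrow> (snd x > 0 \<and> snd x \<le> r/2 \<and> cball (fst x) (snd x) \<subseteq> ball w r \<and>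
      (\<exists>q. \<forall>v\<in>cball (fst x) (snd x). \<forall>c\<in>subd C v. norm (c - q) \<le> 1 / (real n + 1)))"
  proof (intro allI)
    fix n w r
    show "\<exists>x. (r > 0 \<and> ball w r \<subseteq> W) \<longrightarrow> (snd x > 0 \<and> snd x \<le> r/2 \<and> cball (fst x) (snd x) \<subseteq> ball w r \<and>
      (\<exists>q. \<forall>v\<in>cball (fst x) (snd x). \<forall>c\<in>subd C v. norm (c - q) \<le> 1 / (real n + 1)))"
    proof (cases "r > 0 \<and> ball w r \<subseteq> W")
      case True
      have "1 / (real n + 1) > 0" by simp
      then obtain w' \<delta> q where "\<delta> > 0 \<and> \<delta> \<le> r/2 \<and> cball w' \<delta> \<subseteq> ball w r \<and> (\<forall>v\<in>cball w' \<delta>. \<forall>c\<in>subd C v. norm (c - q) \<le> 1 / (real n + 1))"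
        using dense_step[OF Cne RNP reg R] True by meson
      then show ?thesis by (intro exI[of _ "(w', \<delta>)"]) auto
    qed auto
  qed
  then obtain F where F: "\<And>n w r. r > 0 \<Longrightarrow> ball w r \<subseteq> W \<Longrightarrow> snd (F n w r) > 0 \<and> snd (F n w r) \<le> r/2 \<and>
      cball (fst (F n w r)) (snd (F n w r)) \<subseteq> ball w r \<and>
      (\<exists>q. \<forall>v\<in>cball (fst (F n w r)) (snd (F n w r)). \<forall>c\<in>subd C v. norm (c - q) \<le> 1 / (real n + 1))"
    by metis
  define X where "X = rec_nat (u0, r0) (\<lambda>n x. F n (fst x) (snd x))"
  define c where "c n = fst (X n)" for n
  define \<rho> where "\<rho> n = snd (X n)" for n
  have X0: "c 0 = u0" "\<rho> 0 = r0" by (simp_all add: c_def \<rho>_def X_def)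
  have XS: "c (Suc n) = fst (F n (c n) (\<rho> n))" "\<rho> (Suc n) = snd (F n (c n) (\<rho> n))" for n
    by (simp_all add: c_def \<rho>_def X_def)
  have inv: "\<rho> n > 0 \<and> ball (c n) (\<rho> n) \<subseteq> W \<and> \<rho> n \<le> r0 / 2^n" for n
  proof (induction n)
    case 0 then show ?case using X0 r0 bW by simp
  next
    case (Suc n)
    then have f: "snd (F n (c n) (\<rho> n)) > 0 \<and> snd (F n (c n) (\<rho> n)) \<le> \<rho> n/2 \<and>
      cball (fst (F n (c n) (\<rho> n))) (snd (F n (c n) (\<rho> n))) \<subseteq> ball (c n) (\<rho> n)" using F by blast
    then have "\<rho> (Suc n) > 0" "\<rho> (Suc n) \<le> \<rho> n / 2" "cball (c (Suc n)) (\<rho> (Suc n)) \<subseteq> ball (c n) (\<rho> n)"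
      using XS by auto
    moreover have "\<rho> n / 2 \<le> r0 / 2 ^ Suc n" using Suc by (simp add: field_simps)
    ultimately show ?case using Suc by (meson ball_subset_cball order_trans)
  qed
  have stepc: "cball (c (Suc n)) (\<rho> (Suc n)) \<subseteq> ball (c n) (\<rho> n)" and
    qprop: "\<exists>q. \<forall>v\<in>cball (c (Suc n)) (\<rho> (Suc n)). \<forall>c\<in>subd C v. norm (c - q) \<le> 1 / (real n + 1)" for n
    using F[where n=n and w="c n" and r="\<rho> n"] inv[of n] XS by auto
  have mono: "cball (c m) (\<rho> m) \<subseteq> cball (c n) (\<rho> n)" if "n \<le> m" for m n
    using that
  proof (induction m rule: dec_induct)
    case base then show ?case by simp
  next
    case (step m)
    then show ?case using stepc[of m] ball_subset_cball by blast
  qed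
  have rho_le: "\<rho> n \<le> r0 / (real n + 1)" for n
  proof -
    have "real n + 1 \<le> 2 ^ n"
    proof (induction n)
      case 0 then show ?case by simp
    next
      case (Suc n) then show ?case by simp
    qed
    then have "r0 / 2^n \<le> r0 / (real n + 1)" using r0 by (intro divide_left_mono) auto
    then show ?thesis using inv[of n] by simp
  qed
  have cd: "dist (c m) (c n) \<le> r0 / (real n + 1)" if "n \<le> m" for m n
  proof -
    have "c m \<in> cball (c m) (\<rho> m)" using inv[of m] by simp
    then have "c m \<in> cball (c n) (\<rho> n)" using mono[OF that] by blast
    then show ?thesis using rho_le[of n] by (simp add: dist_commute)
  qed
  have "Cauchy c"
  proof (rule metric_CauchyI)
    fix e :: real assume e: "e > 0"
    obtain N where N: "inverse (of_nat (Suc N)) < e / (2 * r0)"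
      using reals_Archimedean[of "e / (2 * r0)"] e r0 by auto
    then have N': "r0 / (real N + 1) < e / 2" using r0 by (simp add: field_simps)
    show "\<exists>M. \<forall>m\<ge>M. \<forall>n\<ge>M. dist (c m) (c n) < e"
    proof (intro exI allI impI)
      fix m n assume "N \<le> m" "N \<le> n"
      then have "dist (c m) (c N) \<le> r0 / (real N + 1)" "dist (c n) (c N) \<le> r0 / (real N + 1)"
        using cd by auto
      then show "dist (c m) (c n) < e" by (rule arith1[OF dist_triangle2[of "c m" "c n" "c N"]]) (use N' in auto)
    qed
  qed
  then obtain u where u: "c \<longlonglongrightarrow> u" using Cauchy_convergent_iff convergent_def by blast
  have uin: "u \<in> cball (c n) (\<rho> n)" for n
  proof (rule Lim_in_closed_set[OF closed_cball _ _ u])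
    show "eventually (\<lambda>m. c m \<in> cball (c n) (\<rho> n)) sequentially"
      using mono inv unfolding eventually_sequentially by (meson centre_in_cball less_imp_le subsetD)
  qed simp
  show ?thesis
  proof (intro bexI allI impI)
    show "u \<in> ball u0 r0" using uin[of 1] stepc[of 0] X0 by auto
    fix \<epsilon> :: real assume e: "\<epsilon> > 0"
    obtain n where n: "inverse (of_nat (Suc n)) < \<epsilon>" using reals_Archimedean[OF e] by blast
    have ub: "u \<in> ball (c (Suc n)) (\<rho> (Suc n))" using uin[of "Suc (Suc n)"] stepc[of "Suc n"] by auto
    then obtain \<delta> where d: "\<delta> > 0" "ball u \<delta> \<subseteq> ball (c (Suc n)) (\<rho> (Suc n))"
      by (meson open_ball open_contains_ball)
    obtain q where q: "\<forall>v\<in>cball (c (Suc n)) (\<rho> (Suc n)). \<forall>c\<in>subd C v. norm (c - q) \<le> 1 / (real n + 1)"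
      using qprop by blast
    have "1 / (real n + 1) \<le> \<epsilon>" using n by (simp add: inverse_eq_divide add.commute)
    then have "\<forall>v\<in>ball u \<delta>. \<forall>c\<in>subd C v. norm (c - q) \<le> \<epsilon>"
      using q d(2) ball_subset_cball by fastforce
    moreover have "ball u \<delta> \<subseteq> W" using d(2) inv[of "Suc n"] by blast
    ultimately show "\<exists>\<delta>>0. \<exists>q. ball u \<delta> \<subseteq> W \<and> (\<forall>v\<in>ball u \<delta>. \<forall>c\<in>subd C v. norm (c - q) \<le> \<epsilon>)"
      using d(1) by blast
  qed
qed

end

theorem mainTheorem5:
  fixes C :: "('a::banach \<Rightarrow>\<^sub>L real) set"
  assumes "dual_RNP TYPE('a)"
    and "C \<noteq> {}" and "closed C" and "convex C"
  shows "interior (support_dom C) \<subseteq> closure (wstar_Exp C \<inter> interior (support_dom C))"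
proof
  fix u0 assume u0: "u0 \<in> interior (support_dom C)"
  obtain \<rho> R where \<rho>: "\<rho> > 0" "R > 0" and
    reg: "\<forall>z\<in>ball u0 \<rho>. (\<exists>s. support_fun C z = ereal s) \<and> subd C z \<noteq> {} \<and> (\<forall>c\<in>subd C z. norm c \<le> R)"
    using region[OF assms(2) u0] by blast
  have Wint: "ball u0 \<rho> \<subseteq> interior (support_dom C)"
  proof (rule interior_maximal)
    show "ball u0 \<rho> \<subseteq> support_dom C" using reg by (force simp: support_dom_def)
  qed simp
  show "u0 \<in> closure (wstar_Exp C \<inter> interior (support_dom C))"
    unfolding closure_approachable
  proof (intro allI impI)
    fix e :: real assume e: "e > 0"
    define r0 where "r0 = min \<rho> e"
    have r0: "r0 > 0" "ball u0 r0 \<subseteq> ball u0 \<rho>" using e \<rho> by (auto simp: r0_def)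
    obtain u where u: "u \<in> ball u0 r0"
      and P: "\<forall>\<epsilon>>0. \<exists>\<delta>>0. \<exists>q. ball u \<delta> \<subseteq> ball u0 \<rho> \<and> (\<forall>v\<in>ball u \<delta>. \<forall>c\<in>subd C v. norm (c - q) \<le> \<epsilon>)"
      using nested[OF assms(2,1) reg \<rho>(2) r0] by blast
    have uW: "u \<in> ball u0 \<rho>" using u r0 by blast
    have "u \<in> wstar_Exp C" by (rule exposes[OF assms(2,3) reg uW P])
    moreover have "u \<in> interior (support_dom C)" using uW Wint by blast
    moreover have "dist u u0 < e" using u by (simp add: r0_def dist_commute)
    ultimately show "\<exists>x\<in>wstar_Exp C \<inter> interior (support_dom C). dist x u0 < e" by blast
  qed
qed


end
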